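(* For all sufficiently large constants $d$ and all sufficiently large $n$, with probability at least $1-10n^{-3/4}$ over the instances of $G\sim G(n,d/n)$, any two distinct cycles of $G$ each of length at most $4\frac{\ln n}{(\ln d)^5}$ are at distance greater than $10\frac{\log n}{(\log d)^5}$.
   Context: $G(n,d/n)$ is the Erdős–Rényi random graph on $n$ vertices with independent edge probability $d/n$, with $d$ a constant. The distance between two cycles is the minimum graph distance between a vertex of one and a vertex of the other. *)

theory Defs
  imports Complex_Main
begin

text \<open>Simple graphs on vertex set {0..<n}, given by their edge set (a set of 2-element sets).\<close>

definition all_edges :: "nat \<Rightarrow> nat set set" where
  "all_edges n = {e. \<exists>u v. u < n \<and> v < n \<and> u \<noteq> v \<and> e = {u, v}}"

text \<open>Probability that G(n,p) has property P: each of the possible edges is present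
  independently with probability p.\<close>
definition gnp_prob :: "nat \<Rightarrow> real \<Rightarrow> (nat set set \<Rightarrow> bool) \<Rightarrow> real" where
  "gnp_prob n p P = (\<Sum>E\<in>Pow (all_edges n).
      if P E then p ^ card E * (1 - p) ^ (card (all_edges n) - card E) else 0)"

definition is_cycle :: "nat set set \<Rightarrow> nat list \<Rightarrow> bool" where
  "is_cycle E c \<longleftrightarrow> length c \<ge> 3 \<and> distinct c \<and>
     (\<forall>i < length c. {c ! i, c ! ((i + 1) mod length c)} \<in> E)"

text \<open>The edge set of a cycle; two cycles are the same iff they have the same edge set.\<close>
definition cycle_edges :: "nat list \<Rightarrow> nat set set" where
  "cycle_edges c = {{c ! i, c ! ((i + 1) mod length c)} | i. i < length c}"

definition is_walk :: "nat set set \<Rightarrow> nat list \<Rightarrow> bool" where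
  "is_walk E xs \<longleftrightarrow> xs \<noteq> [] \<and> (\<forall>i. Suc i < length xs \<longrightarrow> {xs ! i, xs ! Suc i} \<in> E)"

text \<open>The graph distance between vertex sets A and B exceeds r: every walk from A to B
  has more than r edges (vacuous if no such walk exists, i.e. infinite distance).\<close>
definition dist_gt :: "nat set set \<Rightarrow> nat set \<Rightarrow> nat set \<Rightarrow> real \<Rightarrow> bool" where
  "dist_gt E A B r \<longleftrightarrow>
     (\<forall>xs. is_walk E xs \<and> hd xs \<in> A \<and> last xs \<in> B \<longrightarrow> real (length xs - 1) > r)"

end

theory Submission
  imports Defs "HOL-Real_Asymp.Real_Asymp"
begin


lemma pow_div_fact_le_exp:
  assumes "(x::real) \<ge> 0" shows "x ^ n / fact n \<le> exp x"
proof -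
  have s: "summable (\<lambda>m. x^m /\<^sub>R fact m)" using exp_converges sums_summable by blast
  have "(\<Sum>m\<in>{n}. x^m /\<^sub>R fact m) \<le> (\<Sum>m. x^m /\<^sub>R fact m)"
    by (rule sum_le_suminf[OF s]) (use assms in auto)
  then show ?thesis using exp_converges[of x, THEN sums_unique] by (simp add: divide_inverse mult.commute)
qed

lemma tt_fact: "real t ^ t \<le> fact t * exp (real t)"
proof -
  have "real t ^ t / fact t \<le> exp (real t)" by (rule pow_div_fact_le_exp) simp
  then show ?thesis by (simp add: divide_le_eq mult.commute)
qed

lemma sum_pow_binom:
  assumes "finite A"
  shows "(\<Sum>E\<in>Pow A. (p::real) ^ card E * (1 - p) ^ (card A - card E)) = 1"
proof -
  have "(\<Prod>x\<in>A. p + (1 - p)) = (\<Sum>X\<in>Pow A. (\<Prod>x\<in>X. p) * (\<Prod>x\<in>A-X. 1 - p))"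
    by (rule prod_add[OF assms])
  also have "\<dots> = (\<Sum>E\<in>Pow A. p ^ card E * (1 - p) ^ (card A - card E))"
    apply (rule sum.cong[OF refl])
    using assms by (auto simp: card_Diff_subset finite_subset)
  finally show ?thesis by simp
qed

lemma sum_superset:
  assumes "finite A" "H \<subseteq> A"
  shows "(\<Sum>E\<in>Pow A. if H \<subseteq> E then (p::real) ^ card E * (1 - p) ^ (card A - card E) else 0) = p ^ card H"
proof -
  have fH: "finite H" using assms finite_subset by blast
  have "(\<Sum>E\<in>Pow A. if H \<subseteq> E then p ^ card E * (1 - p) ^ (card A - card E) else 0)
      = (\<Sum>E\<in>{E\<in>Pow A. H \<subseteq> E}. p ^ card E * (1 - p) ^ (card A - card E))"
    using assms by (subst sum.inter_filter[symmetric]) auto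
  also have "{E\<in>Pow A. H \<subseteq> E} = (\<lambda>F. H \<union> F) ` Pow (A - H)" 
  proof (intro set_eqI iffI)
    fix E assume "E \<in> {E\<in>Pow A. H \<subseteq> E}"
    then have "E = H \<union> (E - H)" "E - H \<in> Pow (A - H)" by auto
    then show "E \<in> (\<lambda>F. H \<union> F) ` Pow (A - H)" by blast
  qed (use assms in auto)
  also have "(\<Sum>E\<in>(\<lambda>F. H \<union> F) ` Pow (A - H). p ^ card E * (1 - p) ^ (card A - card E))
     = (\<Sum>F\<in>Pow (A - H). p ^ card (H \<union> F) * (1 - p) ^ (card A - card (H \<union> F)))"
    by (rule sum.reindex_cong[where l="\<lambda>F. H \<union> F"]) (auto simp: inj_on_def)
  also have "\<dots> = (\<Sum>F\<in>Pow (A - H). p ^ card H * (p ^ card F * (1 - p) ^ (card (A - H) - card F)))"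
  proof (rule sum.cong[OF refl])
    fix F assume F: "F \<in> Pow (A - H)"
    have fF: "finite F" using F assms by (meson Diff_subset PowD finite_subset)
    have c: "card (H \<union> F) = card H + card F" using F fH fF by (subst card_Un_disjoint) auto
    have c2: "card (A - H) = card A - card H" using assms fH by (simp add: card_Diff_subset)
    have c3: "card F \<le> card (A - H)" using F assms by (intro card_mono) auto
    show "p ^ card (H \<union> F) * (1 - p) ^ (card A - card (H \<union> F)) = p ^ card H * (p ^ card F * (1 - p) ^ (card (A - H) - card F))"
      using c c2 c3 by (simp add: power_add algebra_simps)
  qed
  also have "\<dots> = p ^ card H" using sum_pow_binom[of "A - H" p] assms
    by (simp add: sum_distrib_left[symmetric])
  finally show ?thesis .
qed

lemma union_bound:
  fixes p :: real and P :: "'a set \<Rightarrow> bool"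
  assumes A: "finite A" and p: "0 \<le> p" "p \<le> 1"
    and K: "finite K"
    and Hs: "\<And>t. t \<in> K \<Longrightarrow> Hs t \<subseteq> Pow A \<and> (\<forall>H\<in>Hs t. card H = t)"
    and bad: "\<And>E. E \<subseteq> A \<Longrightarrow> \<not> P E \<Longrightarrow> \<exists>t\<in>K. \<exists>H\<in>Hs t. H \<subseteq> E"
  shows "(\<Sum>E\<in>Pow A. if P E then p ^ card E * (1 - p) ^ (card A - card E) else 0)
          \<ge> 1 - (\<Sum>t\<in>K. real (card (Hs t)) * p ^ t)"
proof -
  define w where "w E = p ^ card E * (1 - p) ^ (card A - card E)" for E :: "'a set"
  have w0: "w E \<ge> 0" for E using p by (simp add: w_def)
  have fHs: "finite (Hs t)" if "t \<in> K" for t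
    using Hs[OF that] A by (meson finite_Pow_iff finite_subset)
  have split: "(\<Sum>E\<in>Pow A. if P E then w E else 0) = 1 - (\<Sum>E\<in>Pow A. if P E then 0 else w E)"
  proof -
    have "(\<Sum>E\<in>Pow A. if P E then w E else 0) + (\<Sum>E\<in>Pow A. if P E then 0 else w E) = (\<Sum>E\<in>Pow A. w E)"
      by (subst sum.distrib[symmetric]) (rule sum.cong, auto)
    also have "\<dots> = 1" using sum_pow_binom[OF A, of p] by (simp add: w_def)
    finally show ?thesis by linarith
  qed
  have pw: "(if P E then 0 else w E) \<le> (\<Sum>t\<in>K. \<Sum>H\<in>Hs t. if H \<subseteq> E then w E else 0)" if E: "E \<in> Pow A" for E
  proof (cases "P E")
    case True
    then show ?thesis using w0 by (simp add: sum_nonneg)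
  next
    case False
    then obtain t H where t: "t \<in> K" "H \<in> Hs t" "H \<subseteq> E" using bad E by blast
    have "w E = (if H \<subseteq> E then w E else 0)" using t by simp
    also have "\<dots> \<le> (\<Sum>H\<in>Hs t. if H \<subseteq> E then w E else 0)"
      by (rule member_le_sum) (use t fHs w0 in auto)
    also have "\<dots> \<le> (\<Sum>t\<in>K. \<Sum>H\<in>Hs t. if H \<subseteq> E then w E else 0)"
      by (rule member_le_sum[where f="\<lambda>t. \<Sum>H\<in>Hs t. if H \<subseteq> E then w E else 0"])
         (use t K w0 in \<open>auto intro!: sum_nonneg\<close>)
    finally show ?thesis using False by simp
  qed
  have "(\<Sum>E\<in>Pow A. if P E then 0 else w E) \<le> (\<Sum>E\<in>Pow A. \<Sum>t\<in>K. \<Sum>H\<in>Hs t. if H \<subseteq> E then w E else 0)"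
    by (rule sum_mono) (rule pw)
  also have "\<dots> = (\<Sum>t\<in>K. \<Sum>H\<in>Hs t. \<Sum>E\<in>Pow A. if H \<subseteq> E then w E else 0)"
    by (simp add: sum.swap[of _ "Pow A"])
  also have "\<dots> = (\<Sum>t\<in>K. \<Sum>H\<in>Hs t. p ^ t)"
  proof (intro sum.cong refl)
    fix t H assume "t \<in> K" "H \<in> Hs t"
    then show "(\<Sum>E\<in>Pow A. if H \<subseteq> E then w E else 0) = p ^ t"
      using sum_superset[OF A, of H p] Hs unfolding w_def by auto
  qed
  also have "\<dots> = (\<Sum>t\<in>K. real (card (Hs t)) * p ^ t)" by simp
  finally show ?thesis using split unfolding w_def by linarith
qed




definition ce :: "nat list \<Rightarrow> nat \<Rightarrow> nat set" where
  "ce c i = {c ! i, c ! ((i + 1) mod length c)}"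

lemma cycle_edges_ce: "cycle_edges c = ce c ` {..<length c}"
  unfolding cycle_edges_def ce_def by auto

lemma suc_mod: "(i::nat) < k \<Longrightarrow> (i + 1) mod k = (if i + 1 = k then 0 else i + 1)"
  using mod_less[of "i+1" k] by auto

lemma ce_inj:
  assumes "3 \<le> length c" "distinct c"
  shows "inj_on (ce c) {..<length c}"
proof (rule inj_onI)
  fix i j assume i: "i \<in> {..<length c}" and j: "j \<in> {..<length c}" and eq: "ce c i = ce c j"
  let ?k = "length c"
  have k0: "0 < ?k" using assms(1) by linarith
  have mi: "(i + 1) mod ?k < ?k" "(j + 1) mod ?k < ?k" using k0 by simp_all
  have nd: "\<And>a b. a < ?k \<Longrightarrow> b < ?k \<Longrightarrow> c ! a = c ! b \<longleftrightarrow> a = b"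
    using assms(2) nth_eq_iff_index_eq by blast
  show "i = j"
  proof (rule ccontr)
    assume ne: "i \<noteq> j"
    have "c ! i \<noteq> c ! j" using nd i j ne by auto
    then have a: "c ! i = c ! ((j + 1) mod ?k)" and b: "c ! ((i + 1) mod ?k) = c ! j"
      using eq unfolding ce_def by (auto simp: doubleton_eq_iff)
    have a': "i = (j + 1) mod ?k" using nd[of i "(j+1) mod ?k"] a i mi by auto
    have b': "j = (i + 1) mod ?k" using nd[of "(i+1) mod ?k" j] b j mi by auto
    have jk: "j < ?k" "i < ?k" using i j by auto
    show False
    proof (cases "j + 1 = ?k")
      case True
      then have "i = 0" using a' by simp
      moreover have "1 mod ?k = (1::nat)" using assms(1) by (intro mod_less) linarith
      ultimately have "j = 1" using b' by simp
      then show False using True assms(1) by linarith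
    next
      case False
      then have ij: "i = j + 1" using a' suc_mod[OF jk(1)] by simp
      show False
      proof (cases "i + 1 = ?k")
        case True
        then have "(i + 1) mod ?k = 0" by simp
        then show False using b' ij True assms(1) by linarith
      next
        case False
        then have "(i + 1) mod ?k = i + 1" using jk(2) by (intro mod_less) linarith
        then show False using b' ij by linarith
      qed
    qed
  qed
qed

lemma card_cycle_edges:
  assumes "3 \<le> length c" "distinct c"
  shows "card (cycle_edges c) = length c"
  using card_image[OF ce_inj[OF assms]] by (simp add: cycle_edges_ce)

lemma ce_sub: "0 < length c \<Longrightarrow> i < length c \<Longrightarrow> ce c i \<subseteq> set c"
  unfolding ce_def by auto

lemma cycle_edges_sub: "x \<in> cycle_edges c \<Longrightarrow> x \<subseteq> set c"
proof -
  assume "x \<in> cycle_edges c"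
  then obtain i where i: "i < length c" "x = ce c i" unfolding cycle_edges_ce by blast
  then have "0 < length c" by linarith
  then show ?thesis using ce_sub[OF _ i(1)] i(2) by simp
qed

lemma Union_cycle_edges: "0 < length c \<Longrightarrow> \<Union>(cycle_edges c) = set c"
proof
  show "\<Union>(cycle_edges c) \<subseteq> set c" using cycle_edges_sub by blast
  show "0 < length c \<Longrightarrow> set c \<subseteq> \<Union>(cycle_edges c)"
  proof
    fix x assume "0 < length c" "x \<in> set c"
    then obtain i where "i < length c" "x = c ! i" by (auto simp: in_set_conv_nth)
    then show "x \<in> \<Union>(cycle_edges c)" unfolding cycle_edges_ce ce_def by blast
  qed
qed

lemma shared_aux:
  assumes c1: "3 \<le> length c1" "distinct c1" and c2: "3 \<le> length c2" "distinct c2"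
    and ns: "\<not> cycle_edges c2 \<subseteq> cycle_edges c1" and sh: "set c1 \<inter> set c2 \<noteq> {}"
  shows "card (set c1 \<union> set c2) < card (cycle_edges c1 \<union> cycle_edges c2)"
proof -
  define k where "k = length c2"
  define e where "e = ce c2"
  define I where "I = {i. i < k \<and> e i \<notin> cycle_edges c1}"
  define J where "J = {j. j < k \<and> c2 ! j \<notin> set c1}"
  define g where "g j = (if j = 0 then k - 1 else j - 1)" for j
  have k3: "3 \<le> k" using c2 k_def by simp
  have sucg: "(g j + 1) mod k = j" if "j < k" for j
    using that k3 by (auto simp: g_def)
  have gk: "g j < k" if "j < k" for j using that k3 by (auto simp: g_def)
  have eI: "i \<in> I" if "i < k" "c2 ! ((i + 1) mod k) \<notin> set c1" for i
  proof -
    have "c2 ! ((i + 1) mod k) \<in> e i" unfolding e_def ce_def k_def by simp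
    then have "\<not> e i \<subseteq> set c1" using that by blast
    then show ?thesis using that cycle_edges_sub unfolding I_def by blast
  qed
  have eI2: "i \<in> I" if "i < k" "c2 ! i \<notin> set c1" for i
  proof -
    have "c2 ! i \<in> e i" unfolding e_def ce_def k_def by simp
    then have "\<not> e i \<subseteq> set c1" using that by blast
    then show ?thesis using that cycle_edges_sub unfolding I_def by blast
  qed
  have gJ: "g ` J \<subseteq> I"
  proof
    fix i assume "i \<in> g ` J"
    then obtain j where j: "j \<in> J" "i = g j" by blast
    have jk: "j < k" "c2 ! j \<notin> set c1" using j(1) unfolding J_def by auto
    have "i < k" using gk[OF jk(1)] j(2) by simp
    moreover have "(i + 1) mod k = j" using sucg[OF jk(1)] j(2) by simp
    ultimately show "i \<in> I" using eI[of i] jk(2) by simp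
  qed
  have ginj: "inj_on g J"
  proof (rule inj_onI)
    fix x y assume "x \<in> J" "y \<in> J" "g x = g y"
    then have "x < k" "y < k" unfolding J_def by auto
    then show "x = y" using sucg \<open>g x = g y\<close> by metis
  qed
  have notall: "\<exists>i\<in>I. i \<notin> g ` J"
  proof (rule ccontr)
    assume "\<not> ?thesis"
    then have all: "\<forall>i\<in>I. i \<in> g ` J" by blast
    have closed: "(i + 1) mod k \<in> I" if "i \<in> I" for i
    proof -
      have "i \<in> g ` J" using all that by simp
      then obtain j where "j \<in> J" "i = g j" by (rule imageE) simp
      then have "(i + 1) mod k \<in> J" using sucg unfolding J_def by auto
      then show ?thesis using eI2 unfolding J_def by auto
    qed
    obtain x where "x \<in> cycle_edges c2" "x \<notin> cycle_edges c1" using ns by blast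
    then obtain i0 where i0: "i0 < k" "e i0 \<notin> cycle_edges c1"
      unfolding cycle_edges_ce e_def k_def by auto
    then have i0I: "i0 \<in> I" unfolding I_def by simp
    have allm: "(i0 + m) mod k \<in> I" for m
    proof (induction m)
      case 0 then show ?case using i0I i0 by simp
    next
      case (Suc m)
      have "(i0 + Suc m) mod k = ((i0 + m) mod k + 1) mod k" by (simp add: mod_Suc_eq)
      then show ?case using closed[OF Suc] by simp
    qed
    have allI: "i \<in> I" if "i < k" for i
    proof -
      have "(i0 + (k - i0 + i)) mod k = i" using that i0 by simp
      then show ?thesis using allm[of "k - i0 + i"] by simp
    qed
    have "c2 ! j \<notin> set c1" if "j < k" for j
    proof -
      have "g j \<in> I" using allI gk that by blast
      then have "g j \<in> g ` J" using all by simp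
      then obtain j' where j': "j' \<in> J" "g j = g j'" by (rule imageE) simp
      have "j' < k" using j' unfolding J_def by simp
      then have "j' = (g j' + 1) mod k" using sucg by simp
      also have "\<dots> = (g j + 1) mod k" using j' by simp
      also have "\<dots> = j" using sucg that by simp
      finally have "j' = j" .
      then show ?thesis using j' unfolding J_def by simp
    qed
    moreover obtain x where "x \<in> set c1" "x \<in> set c2" using sh by blast
    moreover then obtain j where "j < length c2" "c2 ! j = x" by (metis in_set_conv_nth)
    ultimately show False unfolding k_def by blast
  qed
  have fI: "finite I" unfolding I_def by simp
  have cJI: "card J < card I"
  proof -
    have "g ` J \<subset> I" using gJ notall by blast
    then have "card (g ` J) < card I" using fI by (simp add: psubset_card_mono)
    then show ?thesis using card_image[OF ginj] by simp
  qed
  have cI: "card (cycle_edges c2 - cycle_edges c1) = card I"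
  proof -
    have "cycle_edges c2 - cycle_edges c1 = e ` I"
    proof (intro equalityI subsetI)
      fix x assume "x \<in> cycle_edges c2 - cycle_edges c1"
      then obtain i where "i < k" "x = e i" "x \<notin> cycle_edges c1"
        unfolding cycle_edges_ce e_def k_def by blast
      then show "x \<in> e ` I" unfolding I_def by blast
    next
      fix x assume "x \<in> e ` I"
      then obtain i where "i < k" "x = e i" "e i \<notin> cycle_edges c1"
        unfolding I_def by blast
      then show "x \<in> cycle_edges c2 - cycle_edges c1"
        unfolding cycle_edges_ce e_def k_def by blast
    qed
    moreover have "inj_on e I" using ce_inj[OF c2] unfolding e_def I_def k_def
      by (rule inj_on_subset) auto
    ultimately show ?thesis by (simp add: card_image)
  qed
  have cJ: "card (set c2 - set c1) = card J"
  proof -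
    have "set c2 - set c1 = (\<lambda>j. c2 ! j) ` J"
    proof (intro equalityI subsetI)
      fix x assume x: "x \<in> set c2 - set c1"
      then obtain j where "j < length c2" "c2 ! j = x" by (metis DiffD1 in_set_conv_nth)
      then show "x \<in> (\<lambda>j. c2 ! j) ` J" using x unfolding J_def k_def by blast
    next
      fix x assume "x \<in> (\<lambda>j. c2 ! j) ` J"
      then show "x \<in> set c2 - set c1" unfolding J_def k_def by auto
    qed
    moreover have "inj_on (\<lambda>j. c2 ! j) J" using c2(2) unfolding J_def k_def inj_on_def
      using nth_eq_iff_index_eq by blast
    ultimately show ?thesis by (simp add: card_image)
  qed
  have "card (set c1 \<union> set c2) = card (set c1 \<union> (set c2 - set c1))" by simp
  also have "\<dots> = card (set c1) + card (set c2 - set c1)"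
    by (rule card_Un_disjoint) auto
  also have "\<dots> = length c1 + card J" using cJ c1 by (simp add: distinct_card)
  also have "\<dots> < card (cycle_edges c1) + card I" using cJI card_cycle_edges[OF c1] by simp
  also have "\<dots> = card (cycle_edges c1 \<union> cycle_edges c2)"
  proof -
    have f: "finite (cycle_edges c)" for c unfolding cycle_edges_ce by simp
    have "card (cycle_edges c1 \<union> cycle_edges c2) = card (cycle_edges c1 \<union> (cycle_edges c2 - cycle_edges c1))" by simp
    also have "\<dots> = card (cycle_edges c1) + card (cycle_edges c2 - cycle_edges c1)"
      by (rule card_Un_disjoint) (auto simp: f)
    finally show ?thesis using cI by simp
  qed
  finally show ?thesis .
qed




lemma walk_aux:
  fixes ys :: "nat list" and r :: nat and V1 V2 :: "nat set"
  assumes len: "length ys = Suc r" and r1: "1 \<le> r"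
    and h0: "ys!0 \<in> V1" and hr: "ys!r \<in> V2" and disj: "V1 \<inter> V2 = {}"
    and n1: "\<And>i. 0 < i \<Longrightarrow> i \<le> r \<Longrightarrow> ys!i \<notin> V1"
    and n2: "\<And>i. i < r \<Longrightarrow> ys!i \<notin> V2"
  shows "card ((\<lambda>i. ys!i) ` {1..<r}) < card {{ys!i, ys!Suc i} | i. i < r}"
proof -
  define M where "M = (\<lambda>i. ys!i) ` {1..<r}"
  define WE where "WE = {{ys!i, ys!Suc i} | i. i < r}"
  define fi where "fi x = (LEAST i. ys!i = x)" for x
  define f where "f x = {ys!(fi x - 1), ys!(fi x)}" for x
  have fiM: "ys!(fi x) = x \<and> 1 \<le> fi x \<and> fi x < r" if xM: "x \<in> M" for x
  proof -
    obtain i where i0: "i \<in> {1..<r}" "x = ys!i" using xM unfolding M_def by blast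
    then have i: "1 \<le> i" "i < r" "x = ys!i" by auto
    have a: "ys!(fi x) = x" unfolding fi_def using LeastI[of "\<lambda>j. ys!j = x" i] i by simp
    have b: "fi x \<le> i" unfolding fi_def by (rule Least_le) (simp add: i)
    have c: "fi x \<noteq> 0"
    proof
      assume "fi x = 0"
      then have "x \<in> V1" using a h0 by simp
      moreover have "x \<notin> V1" using n1[of i] i by simp
      ultimately show False by simp
    qed
    show ?thesis using a b c i by simp
  qed
  have fiLeast: "ys!j \<noteq> x" if "j < fi x" for j x
    using not_less_Least[of j "\<lambda>i. ys!i = x"] that unfolding fi_def by blast
  have fWE: "f x \<in> WE" if "x \<in> M" for x
  proof -
    have "fi x - 1 < r" "Suc (fi x - 1) = fi x" using fiM[OF that] by auto
    then show ?thesis unfolding WE_def f_def by (metis (mono_tags, lifting) mem_Collect_eq)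
  qed
  have oneway: "False" if h: "x \<in> M" "y \<in> M" "f x = f y" "fi x < fi y" for x y
  proof -
    have "y \<in> f y" using fiM[OF h(2)] unfolding f_def by simp
    then have "y \<in> {ys!(fi x - 1), ys!(fi x)}" using h(3) unfolding f_def by simp
    then have "y = ys!(fi x - 1) \<or> y = ys!(fi x)" by simp
    then obtain j where j: "j \<le> fi x" "ys!j = y" by (metis diff_le_self order_refl)
    then have "j < fi y" using h(4) by linarith
    then show False using fiLeast j(2) by blast
  qed
  have finj: "inj_on f M"
  proof (rule inj_onI)
    fix x y assume xy: "x \<in> M" "y \<in> M" "f x = f y"
    show "x = y"
    proof (cases "fi x = fi y")
      case True
      then show ?thesis using fiM[OF xy(1)] fiM[OF xy(2)] by metis
    next
      case False
      then have "fi x < fi y \<or> fi y < fi x" by linarith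
      then show ?thesis using oneway[of x y] oneway[of y x] xy by auto
    qed
  qed
  define l where "l = {ys!(r-1), ys!r}"
  have lWE: "l \<in> WE"
  proof -
    have "r - 1 < r" "Suc (r - 1) = r" using r1 by auto
    then show ?thesis unfolding WE_def l_def by (metis (mono_tags, lifting) mem_Collect_eq)
  qed
  have lnot: "l \<notin> f ` M"
  proof
    assume "l \<in> f ` M"
    then obtain x where x: "x \<in> M" "l = f x" by blast
    have "ys!r \<in> l" unfolding l_def by simp
    then have "ys!r \<in> f x" using x(2) by simp
    then have "ys!r = ys!(fi x - 1) \<or> ys!r = ys!(fi x)" unfolding f_def by simp
    moreover have "fi x - 1 < r" "fi x < r" using fiM[OF x(1)] by auto
    moreover then have "ys!(fi x - 1) \<notin> V2" "ys!(fi x) \<notin> V2" using n2 by blast+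
    ultimately show False using hr by auto
  qed
  have fin: "finite WE"
  proof -
    have "WE = (\<lambda>i. {ys!i, ys!Suc i}) ` {..<r}" unfolding WE_def by auto
    then show ?thesis by simp
  qed
  have "f ` M \<subset> WE" using fWE lWE lnot by blast
  then have "card (f ` M) < card WE" using fin by (simp add: psubset_card_mono)
  then show ?thesis using card_image[OF finj] unfolding M_def WE_def by simp
qed




lemma cycle_facts:
  assumes "is_cycle E c"
  shows "3 \<le> length c" "distinct c" "cycle_edges c \<subseteq> E" "finite (cycle_edges c)"
    "\<Union>(cycle_edges c) = set c" "card (cycle_edges c) = length c"
proof -
  show l: "3 \<le> length c" "distinct c" using assms unfolding is_cycle_def by auto
  show "cycle_edges c \<subseteq> E" using assms unfolding is_cycle_def cycle_edges_def by auto
  show "finite (cycle_edges c)" unfolding cycle_edges_ce by simp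
  show "\<Union>(cycle_edges c) = set c" using l by (intro Union_cycle_edges) linarith
  show "card (cycle_edges c) = length c" using card_cycle_edges l by blast
qed

lemma core:
  assumes c1: "is_cycle E c1" and c2: "is_cycle E c2" and ne: "cycle_edges c1 \<noteq> cycle_edges c2"
    and w: "is_walk E xs" "hd xs \<in> set c1" "last xs \<in> set c2"
  shows "\<exists>H \<subseteq> E. finite H \<and> finite (\<Union>H) \<and> card (\<Union>H) < card H \<and>
           card (\<Union>H) \<le> length c1 + length c2 + (length xs - 1)"
proof -
  note f1 = cycle_facts[OF c1] and f2 = cycle_facts[OF c2]
  define P where "P r \<longleftrightarrow> (\<exists>ys. is_walk E ys \<and> hd ys \<in> set c1 \<and> last ys \<in> set c2 \<and> length ys = Suc r)" for r
  have xne: "xs \<noteq> []" using w(1) unfolding is_walk_def by simp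
  have "P (length xs - 1)" unfolding P_def using w xne by (intro exI[of _ xs]) auto
  define r where "r = (LEAST r. P r)"
  have Pr: "P r" unfolding r_def by (rule LeastI) fact
  have rle: "r \<le> length xs - 1" unfolding r_def by (rule Least_le) fact
  have minr: "\<not> P r'" if "r' < r" for r' using not_less_Least[of r' P] that unfolding r_def by blast
  obtain ys where ys: "is_walk E ys" "hd ys \<in> set c1" "last ys \<in> set c2" "length ys = Suc r"
    using Pr unfolding P_def by blast
  have yne: "ys \<noteq> []" using ys(4) by auto
  have y0: "ys!0 \<in> set c1" using ys(2) yne by (simp add: hd_conv_nth)
  have yr: "ys!r \<in> set c2" using ys(3) yne ys(4) by (simp add: last_conv_nth)
  have yedge: "{ys!i, ys!Suc i} \<in> E" if "i < r" for i
    using ys(1) ys(4) that unfolding is_walk_def by auto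
  have n1: "ys!i \<notin> set c1" if i: "0 < i" "i \<le> r" for i
  proof
    assume yi: "ys!i \<in> set c1"
    define zs where "zs = drop i ys"
    have il: "i < length ys" using i ys(4) by simp
    have "is_walk E zs" unfolding is_walk_def zs_def
    proof (intro conjI allI impI)
      show "drop i ys \<noteq> []" using il by simp
      fix j assume "Suc j < length (drop i ys)"
      then have "Suc (i + j) < length ys" by simp
      then have "{ys ! (i+j), ys ! Suc (i+j)} \<in> E" using ys(1) unfolding is_walk_def by blast
      then show "{drop i ys ! j, drop i ys ! Suc j} \<in> E" using il by simp
    qed
    moreover have "hd zs \<in> set c1" unfolding zs_def using il yi by (simp add: hd_drop_conv_nth)
    moreover have "last zs \<in> set c2" unfolding zs_def using il ys(3) by simp
    moreover have "length zs = Suc (r - i)" unfolding zs_def using ys(4) i by simp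
    ultimately have "P (r - i)" unfolding P_def by blast
    moreover have "r - i < r" using i by simp
    ultimately show False using minr by blast
  qed
  have n2: "ys!i \<notin> set c2" if i: "i < r" for i
  proof
    assume yi: "ys!i \<in> set c2"
    define zs where "zs = take (Suc i) ys"
    have il: "Suc i < length ys" using i ys(4) by simp
    have "is_walk E zs" unfolding is_walk_def zs_def
    proof (intro conjI allI impI)
      show "take (Suc i) ys \<noteq> []" using yne by simp
      fix j assume "Suc j < length (take (Suc i) ys)"
      then have j: "Suc j < Suc i" "Suc j < length ys" by auto
      then have "{ys ! j, ys ! Suc j} \<in> E" using ys(1) unfolding is_walk_def by blast
      then show "{take (Suc i) ys ! j, take (Suc i) ys ! Suc j} \<in> E" using j by simp
    qed
    moreover have "hd zs \<in> set c1" unfolding zs_def using ys(2) yne by simp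
    moreover have "last zs \<in> set c2"
    proof -
      have lz: "length zs = Suc i" unfolding zs_def using il by simp
      then have "zs \<noteq> []" by auto
      then have "last zs = zs ! (length zs - 1)" by (rule last_conv_nth)
      also have "\<dots> = zs ! i" using lz by simp
      also have "\<dots> = ys ! i" unfolding zs_def by simp
      finally show ?thesis using yi by simp
    qed
    moreover have "length zs = Suc i" unfolding zs_def using il by simp
    ultimately have "P i" unfolding P_def by blast
    then show False using minr i by blast
  qed
  show ?thesis
  proof (cases "r = 0")
    case True
    define H where "H = cycle_edges c1 \<union> cycle_edges c2"
    have UH: "\<Union>H = set c1 \<union> set c2" unfolding H_def using f1(5) f2(5) by simp
    have sh: "set c1 \<inter> set c2 \<noteq> {}" using y0 yr True by auto
    have lt: "card (\<Union>H) < card H"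
    proof (cases "cycle_edges c2 \<subseteq> cycle_edges c1")
      case False
      then show ?thesis unfolding UH unfolding H_def using shared_aux[OF f1(1,2) f2(1,2) False sh] by simp
    next
      case True
      then have "\<not> cycle_edges c1 \<subseteq> cycle_edges c2" using ne by blast
      moreover have "set c2 \<inter> set c1 \<noteq> {}" using sh by blast
      ultimately have "card (set c2 \<union> set c1) < card (cycle_edges c2 \<union> cycle_edges c1)"
        using shared_aux[OF f2(1,2) f1(1,2)] by simp
      moreover have "set c2 \<union> set c1 = set c1 \<union> set c2" by blast
      moreover have "cycle_edges c2 \<union> cycle_edges c1 = cycle_edges c1 \<union> cycle_edges c2" by blast
      ultimately show ?thesis unfolding UH unfolding H_def by simp
    qed
    have "card (\<Union>H) \<le> card (set c1) + card (set c2)" unfolding UH by (rule card_Un_le)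
    also have "\<dots> = length c1 + length c2" using f1(2) f2(2) by (simp add: distinct_card)
    finally have le: "card (\<Union>H) \<le> length c1 + length c2 + (length xs - 1)" by simp
    have "H \<subseteq> E" "finite H" unfolding H_def using f1 f2 by auto
    moreover have "finite (\<Union>H)" unfolding UH by simp
    ultimately show ?thesis using lt le by blast
  next
    case False
    then have r1: "1 \<le> r" by simp
    have disj: "set c1 \<inter> set c2 = {}"
    proof (rule ccontr)
      assume "set c1 \<inter> set c2 \<noteq> {}"
      then obtain v where v: "v \<in> set c1" "v \<in> set c2" by blast
      have "P 0" unfolding P_def using v by (intro exI[of _ "[v]"]) (simp add: is_walk_def)
      then show False using minr r1 by simp
    qed
    define WE where "WE = {{ys!i, ys!Suc i} | i. i < r}"
    define M where "M = (\<lambda>i. ys!i) ` {1..<r}"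
    have cMW: "card M < card WE" unfolding M_def WE_def
      by (rule walk_aux[OF ys(4) r1 y0 yr disj n1 n2])
    have WEE: "WE \<subseteq> E" unfolding WE_def using yedge by blast
    have finWE: "finite WE"
    proof -
      have "WE = (\<lambda>i. {ys!i, ys!Suc i}) ` {..<r}" unfolding WE_def by auto
      then show ?thesis by simp
    qed
    have d1: "cycle_edges c1 \<inter> WE = {}"
    proof (rule ccontr)
      assume "cycle_edges c1 \<inter> WE \<noteq> {}"
      then obtain x where x: "x \<in> cycle_edges c1" "x \<in> WE" by blast
      then obtain i where i: "i < r" "x = {ys!i, ys!Suc i}" unfolding WE_def by blast
      have "x \<subseteq> set c1" using x(1) cycle_edges_sub by blast
      then have "ys!Suc i \<in> set c1" using i by simp
      then show False using n1[of "Suc i"] i by simp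
    qed
    have d2: "(cycle_edges c1 \<union> WE) \<inter> cycle_edges c2 = {}"
    proof (rule ccontr)
      assume "(cycle_edges c1 \<union> WE) \<inter> cycle_edges c2 \<noteq> {}"
      then obtain x where x: "x \<in> cycle_edges c1 \<union> WE" "x \<in> cycle_edges c2" by blast
      have x2: "x \<subseteq> set c2" using x(2) cycle_edges_sub by blast
      show False
      proof (cases "x \<in> WE")
        case True
        then obtain i where i: "i < r" "x = {ys!i, ys!Suc i}" unfolding WE_def by blast
        then show False using x2 n2[of i] by simp
      next
        case False
        then have "x \<in> cycle_edges c1" using x(1) by blast
        then obtain i where i: "i < length c1" "x = ce c1 i" unfolding cycle_edges_ce by blast
        then have "c1 ! i \<in> x" unfolding ce_def by simp
        then have "c1 ! i \<in> set c2" using x2 by blast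
        moreover have "c1 ! i \<in> set c1" using i by simp
        ultimately show False using disj by blast
      qed
    qed
    define H where "H = cycle_edges c1 \<union> WE \<union> cycle_edges c2"
    have finH: "finite H" unfolding H_def using f1(4) f2(4) finWE by simp
    have cH: "card H = length c1 + card WE + length c2"
    proof -
      have "card H = card (cycle_edges c1 \<union> WE) + card (cycle_edges c2)"
        unfolding H_def by (rule card_Un_disjoint) (use f1(4) f2(4) finWE d2 in auto)
      also have "card (cycle_edges c1 \<union> WE) = card (cycle_edges c1) + card WE"
        by (rule card_Un_disjoint) (use f1(4) finWE d1 in auto)
      finally show ?thesis using f1(6) f2(6) by simp
    qed
    have UWE: "\<Union>WE \<subseteq> set c1 \<union> M \<union> set c2"
    proof
      fix v assume "v \<in> \<Union>WE"
      then obtain i where i: "i < r" "v \<in> {ys!i, ys!Suc i}" unfolding WE_def by blast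
      have inM: "ys!j \<in> set c1 \<union> M \<union> set c2" if "j \<le> r" for j
      proof (cases "j = 0")
        case True then show ?thesis using y0 by simp
      next
        case False
        show ?thesis
        proof (cases "j = r")
          case True then show ?thesis using yr by simp
        next
          case False
          then have "j \<in> {1..<r}" using \<open>j \<noteq> 0\<close> that by simp
          then show ?thesis unfolding M_def by blast
        qed
      qed
      show "v \<in> set c1 \<union> M \<union> set c2" using i inM[of i] inM[of "Suc i"] by auto
    qed
    have UH: "\<Union>H \<subseteq> set c1 \<union> M \<union> set c2"
      unfolding H_def using f1(5) f2(5) UWE by auto
    have finM: "finite M" unfolding M_def by simp
    have cU: "card (\<Union>H) \<le> length c1 + card M + length c2"
    proof -
      have "card (\<Union>H) \<le> card (set c1 \<union> M \<union> set c2)"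
        by (rule card_mono) (use finM UH in auto)
      also have "\<dots> \<le> card (set c1 \<union> M) + card (set c2)" by (rule card_Un_le)
      also have "\<dots> \<le> card (set c1) + card M + card (set c2)" using card_Un_le[of "set c1" M] by simp
      finally show ?thesis using f1(2) f2(2) by (simp add: distinct_card)
    qed
    have cM: "card M \<le> r - 1" unfolding M_def using card_image_le[of "{1..<r}" "\<lambda>i. ys!i"] by simp
    have "H \<subseteq> E" unfolding H_def using f1(3) f2(3) WEE by blast
    moreover have "finite (\<Union>H)" using finM UH by (meson finite_Un List.finite_set finite_subset)
    moreover have "card (\<Union>H) < card H" using cU cH cMW by linarith
    moreover have "card (\<Union>H) \<le> length c1 + length c2 + (length xs - 1)" using cU cM rle r1 by linarith
    ultimately show ?thesis using finH by blast
  qed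
qed




definition Hs :: "nat \<Rightarrow> nat \<Rightarrow> nat set set set" where
  "Hs n t = {H \<in> Pow (all_edges n). card H = t \<and> card (\<Union>H) < t}"

lemma extend_subset:
  assumes "X \<subseteq> A" "finite A" "card X \<le> m" "m \<le> card A"
  shows "\<exists>S. X \<subseteq> S \<and> S \<subseteq> A \<and> card S = m"
proof -
  have fX: "finite X" using assms finite_subset by blast
  have "m - card X \<le> card (A - X)" using assms fX by (simp add: card_Diff_subset)
  then obtain Y where Y: "Y \<subseteq> A - X" "card Y = m - card X" "finite Y"
    by (rule obtain_subset_with_card_n)
  have "card (X \<union> Y) = card X + card Y" using Y fX by (intro card_Un_disjoint) auto
  then show ?thesis using Y assms by (intro exI[of _ "X \<union> Y"]) auto
qed

lemma finite_all_edges: "finite (all_edges n)"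
proof -
  have "all_edges n \<subseteq> Pow {..<n}" unfolding all_edges_def by auto
  then show ?thesis by (meson finite_Pow_iff finite_lessThan finite_subset)
qed

lemma count_Hs:
  assumes t1: "1 \<le> t" and tn: "t - 1 \<le> n"
  shows "card (Hs n t) \<le> (n choose (t - 1)) * (((t - 1)^2) choose t)"
proof -
  define Ss where "Ss = {S. S \<subseteq> {..<n} \<and> card S = t - 1}"
  define P2 where "P2 S = (\<lambda>(u,v). {u,v::nat}) ` (S \<times> S)" for S
  define F where "F S = {H. H \<subseteq> P2 S \<and> card H = t}" for S
  have finSs: "finite Ss" unfolding Ss_def by simp
  have sub: "Hs n t \<subseteq> (\<Union>S\<in>Ss. F S)"
  proof
    fix H assume H: "H \<in> Hs n t"
    then have HA: "H \<subseteq> all_edges n" and cH: "card H = t" and cU: "card (\<Union>H) < t"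
      unfolding Hs_def by auto
    have UH: "\<Union>H \<subseteq> {..<n}" using HA unfolding all_edges_def by auto
    have cle: "card (\<Union>H) \<le> t - 1" using cU by linarith
    have finn: "finite {..<n}" by (rule finite_lessThan)
    have cA: "t - 1 \<le> card {..<n}" unfolding card_lessThan by (rule tn)
    have "\<exists>S. \<Union>H \<subseteq> S \<and> S \<subseteq> {..<n} \<and> card S = t - 1"
      by (rule extend_subset[OF UH finn cle cA])
    then obtain S where S: "\<Union>H \<subseteq> S" "S \<subseteq> {..<n}" "card S = t - 1" by blast
    have "H \<subseteq> P2 S"
    proof
      fix e assume e: "e \<in> H"
      then obtain u v where uv: "e = {u, v}" using HA unfolding all_edges_def by blast
      then have "u \<in> S" "v \<in> S" using e S(1) by auto
      then show "e \<in> P2 S" unfolding P2_def uv by auto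
    qed
    then have HF: "H \<in> F S" unfolding F_def using cH by simp
    have SS: "S \<in> Ss" unfolding Ss_def using S by simp
    show "H \<in> (\<Union>S\<in>Ss. F S)" unfolding UN_iff by (rule bexI[where x=S]) (rule HF, rule SS)
  qed
  have finP2: "finite (P2 S)" if "S \<in> Ss" for S
  proof -
    have "S \<subseteq> {..<n}" using that unfolding Ss_def by simp
    then have "finite S" by (rule finite_subset) simp
    then show ?thesis unfolding P2_def by simp
  qed
  have finF: "finite (F S)" if SS: "S \<in> Ss" for S
  proof -
    have "F S \<subseteq> Pow (P2 S)" unfolding F_def by auto
    moreover have "finite (Pow (P2 S))" using finP2[OF SS] by simp
    ultimately show ?thesis by (rule finite_subset)
  qed
  have "card (Hs n t) \<le> card (\<Union>S\<in>Ss. F S)"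
    by (rule card_mono) (use finSs finF sub in auto)
  also have "\<dots> \<le> (\<Sum>S\<in>Ss. card (F S))" by (rule card_UN_le[OF finSs])
  also have "\<dots> \<le> (\<Sum>S\<in>Ss. ((t - 1)^2) choose t)"
  proof (rule sum_mono)
    fix S assume S: "S \<in> Ss"
    have "card (F S) = card (P2 S) choose t" unfolding F_def using finP2[OF S] by (rule n_subsets)
    moreover have "card (P2 S) \<le> (t - 1)^2"
    proof -
      have "S \<subseteq> {..<n}" using S unfolding Ss_def by simp
      then have "finite S" by (rule finite_subset) simp
      then have "card (P2 S) \<le> card (S \<times> S)" unfolding P2_def by (intro card_image_le) simp
      also have "\<dots> = (t - 1)^2" using S unfolding Ss_def by (simp add: card_cartesian_product power2_eq_square)
      finally show ?thesis .
    qed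
    ultimately show "card (F S) \<le> ((t - 1)^2) choose t" by (simp add: binomial_right_mono)
  qed
  also have "\<dots> = card Ss * (((t - 1)^2) choose t)" by simp
  also have "card Ss = n choose (t - 1)" unfolding Ss_def using n_subsets[of "{..<n}" "t - 1"] by simp
  finally show ?thesis .
qed

lemma count_real:
  assumes t1: "1 \<le> t" and tn: "t - 1 \<le> n" and n0: "0 < n" and d0: "0 \<le> d"
  shows "real (card (Hs n t)) * (d / real n)^t \<le> real t * (exp 2 * d)^t / real n"
proof -
  define a where "a = n choose (t - 1)"
  define b where "b = ((t - 1)^2) choose t"
  have ha0: "real (a * fact (t - 1)) \<le> real (n ^ (t - 1))"
    using binomial_fact_pow[of n "t - 1"] unfolding a_def by (simp only: of_nat_le_iff)
  have ha: "real a * fact (t - 1) \<le> real n ^ (t - 1)"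
    using ha0 by simp
  have hb00: "real (b * fact t) \<le> real (((t - 1)^2) ^ t)"
    using binomial_fact_pow[of "(t-1)^2" t] unfolding b_def by (simp only: of_nat_le_iff)
  have hb0: "real b * fact t \<le> real ((t - 1)^2) ^ t"
    using hb00 by simp
  have "real ((t - 1)^2) ^ t \<le> (real t ^ t)^2"
  proof -
    have "real ((t - 1)^2) \<le> real t ^ 2" by simp
    then have "real ((t - 1)^2) ^ t \<le> (real t ^ 2) ^ t" by (intro power_mono) auto
    also have "\<dots> = (real t ^ t)^2" by (simp add: power_mult[symmetric] mult.commute)
    finally show ?thesis .
  qed
  with hb0 have hb: "real b * fact t \<le> (real t ^ t)^2" by linarith
  have ft: "fact t = real t * fact (t - 1)"
    using t1 by (intro fact_reduce) simp
  have tt: "real t ^ t \<le> fact t * exp (real t)" by (rule tt_fact)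
  have ab: "real a * real b * (fact t)^2 \<le> real t * real n ^ (t - 1) * (fact t * exp (real t))^2"
  proof -
    have "real a * real b * (fact t)^2 = real t * (real a * fact (t - 1)) * (real b * fact t)"
      by (simp add: ft power2_eq_square algebra_simps)
    also have "\<dots> \<le> real t * real n ^ (t - 1) * (real t ^ t)^2"
      by (intro mult_mono ha hb mult_left_mono) auto
    also have "\<dots> \<le> real t * real n ^ (t - 1) * (fact t * exp (real t))^2"
      by (intro mult_left_mono power_mono tt) auto
    finally show ?thesis .
  qed
  have fpos: "(fact t :: real)^2 > 0" by simp
  have ab2: "real a * real b \<le> real t * real n ^ (t - 1) * exp (real t)^2"
  proof -
    have "real a * real b * (fact t)^2 \<le> (real t * real n ^ (t - 1) * exp (real t)^2) * (fact t)^2"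
      using ab by (simp add: power_mult_distrib algebra_simps)
    then show ?thesis using fpos by (simp add: mult_le_cancel_right)
  qed
  have "real (card (Hs n t)) \<le> real (a * b)" using count_Hs[OF t1 tn] unfolding a_def b_def
    by (simp only: of_nat_le_iff)
  then have "real (card (Hs n t)) \<le> real a * real b" by simp
  then have "real (card (Hs n t)) * (d / real n)^t \<le> real t * real n ^ (t - 1) * exp (real t)^2 * (d / real n)^t"
    using ab2 d0 n0 by (intro mult_right_mono) auto
  also have "\<dots> = real t * (exp 2 * d)^t / real n"
  proof -
    have e1: "exp 2 ^ t = exp (real t * 2)" by (simp add: exp_of_nat_mult)
    have e2: "exp (real t)^2 = exp (real t * 2)" by (simp add: power2_eq_square exp_add[symmetric] mult_2_right)
    have e: "exp (real t)^2 = exp 2 ^ t" using e1 e2 by simp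
    have nn: "real n ^ (t - 1) * (d / real n)^t = d^t / real n"
    proof -
      have "real n ^ t = real n ^ (t - 1) * real n" using t1
        by (cases t) simp_all
      then show ?thesis using n0 by (simp add: power_divide field_simps)
    qed
    have "real t * real n ^ (t - 1) * exp (real t)^2 * (d / real n)^t
        = real t * exp 2 ^ t * (real n ^ (t - 1) * (d / real n)^t)" by (simp add: e mult_ac)
    also have "\<dots> = real t * exp 2 ^ t * (d^t / real n)" by (simp only: nn)
    also have "\<dots> = real t * (exp 2 * d)^t / real n" by (simp add: power_mult_distrib)
    finally show ?thesis .
  qed
  finally show ?thesis .
qed

lemma sum_bound:
  assumes n0: "0 < n" and d0: "0 \<le> d" and d1: "1 \<le> exp 2 * d" and "\<forall>t\<in>{1..T}. t - 1 \<le> n"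
  shows "(\<Sum>t\<in>{1..T}. real (card (Hs n t)) * (d / real n)^t) \<le> real T * real T * (exp 2 * d)^T / real n"
proof -
  have "(\<Sum>t\<in>{1..T}. real (card (Hs n t)) * (d / real n)^t) \<le> (\<Sum>t\<in>{1..T}. real T * (exp 2 * d)^T / real n)"
  proof (rule sum_mono)
    fix t assume t: "t \<in> {1..T}"
    have "real (card (Hs n t)) * (d / real n)^t \<le> real t * (exp 2 * d)^t / real n"
      using count_real[of t n d] t assms d0 by auto
    also have "\<dots> \<le> real T * (exp 2 * d)^T / real n"
      using t n0 d1 by (intro divide_right_mono mult_mono power_increasing) auto
    finally show "real (card (Hs n t)) * (d / real n)^t \<le> real T * (exp 2 * d)^T / real n" .
  qed
  also have "\<dots> = real T * real T * (exp 2 * d)^T / real n" by simp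
  finally show ?thesis .
qed




lemma asymp1: "(\<lambda>n::nat. (ln (real n) + 1)^2 / real n powr (1/8)) \<longlonglongrightarrow> 0"
  by real_asymp

lemma key_ineq:
  fixes x :: real assumes "4 \<le> x" shows "18 * (2 + x) / x^5 \<le> 1/8"
proof -
  have "(4::real)^4 \<le> x^4" using assms by (intro power_mono) auto
  then have "256 * x \<le> x^4 * x" using assms by (intro mult_right_mono) auto
  moreover have "x^4 * x = x^5" by algebra
  moreover have "144 * (2 + x) = 288 + 144 * x" by simp
  ultimately have "144 * (2 + x) \<le> x^5" using assms by linarith
  moreover have "x^5 > 0" using assms by simp
  ultimately show ?thesis by (simp add: divide_le_eq)
qed




lemma final_numeric:
  fixes d :: real and n T :: nat
  assumes ld: "4 \<le> ln d" and d0: "0 < d" and n1: "1 \<le> n"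
    and hyp: "(ln (real n) + 1)^2 * (exp 2 * d) \<le> 10 * real n powr (1/8)"
    and hT: "real T \<le> 18 * (ln (real n) / (ln d)^5) + 1"
  shows "real T * real T * (exp 2 * d)^T / real n \<le> 10 * real n powr (-3/4)"
proof -
  define x where "x = ln d"
  define L where "L = ln (real n)"
  define B where "B = 18 * (L / x^5) + 1"
  have x4: "4 \<le> x" using ld x_def by simp
  have L0: "0 \<le> L" using n1 L_def by simp
  have np: "0 < real n" using n1 by simp
  have x5: "1024 \<le> x^5"
  proof -
    have "(4::real)^5 \<le> x^5" using x4 by (intro power_mono) auto
    then show ?thesis by simp
  qed
  have TB: "real T \<le> B" using hT unfolding B_def L_def x_def by simp
  have BL: "B \<le> L + 1"
  proof -
    have "L / x^5 \<le> L / 18" using L0 x5 x4 by (intro divide_left_mono) auto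
    then show ?thesis unfolding B_def by linarith
  qed
  have TT: "real T * real T \<le> (L + 1)^2"
    using TB BL by (simp add: power2_eq_square mult_mono)
  have e1: "exp 2 * d = exp (2 + x)" unfolding x_def using d0 by (simp add: exp_add)
  have e2: "(exp 2 * d)^T = exp (real T * (2 + x))" unfolding e1 by (simp add: exp_of_nat_mult)
  have "exp (real T * (2 + x)) \<le> exp (B * (2 + x))"
    using TB x4 by (intro exp_mono mult_right_mono) auto
  also have "B * (2 + x) = L * (18 * (2 + x) / x^5) + (2 + x)"
    unfolding B_def by (simp add: field_simps)
  also have "\<dots> \<le> L * (1/8) + (2 + x)" using key_ineq[OF x4] L0 by (intro add_right_mono mult_left_mono) auto
  finally have "(exp 2 * d)^T \<le> exp (L * (1/8) + (2 + x))" using e2 by simp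
  also have "\<dots> = real n powr (1/8) * (exp 2 * d)"
    unfolding L_def e1 using np by (simp add: powr_def exp_add mult.commute)
  finally have E: "(exp 2 * d)^T \<le> real n powr (1/8) * (exp 2 * d)" .
  have "real T * real T * (exp 2 * d)^T \<le> (L + 1)^2 * (real n powr (1/8) * (exp 2 * d))"
    using TT E d0 by (intro mult_mono) auto
  also have "\<dots> = ((L + 1)^2 * (exp 2 * d)) * real n powr (1/8)" by simp
  also have "\<dots> \<le> (10 * real n powr (1/8)) * real n powr (1/8)"
    using hyp unfolding L_def by (intro mult_right_mono) auto
  also have "\<dots> = 10 * real n powr (1/4)" by (simp add: powr_add[symmetric])
  finally have "real T * real T * (exp 2 * d)^T / real n \<le> 10 * real n powr (1/4) / real n"
    using np by (intro divide_right_mono) auto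
  also have "\<dots> = 10 * real n powr (-3/4)"
  proof -
    have m: "(-3/4::real) = 1/4 - 1" by simp
    have "real n powr (1/4 - 1) = real n powr (1/4) / real n powr 1" by (rule powr_diff)
    also have "real n powr 1 = real n" using np by simp
    finally show ?thesis unfolding m by simp
  qed
  finally show ?thesis .
qed




theorem lemmaK3:
  shows "\<exists>d0::real. \<forall>d \<ge> d0. \<exists>n0::nat. \<forall>n \<ge> n0.
    gnp_prob n (d / real n) (\<lambda>E. \<forall>c1 c2.
        is_cycle E c1 \<and> is_cycle E c2 \<and> cycle_edges c1 \<noteq> cycle_edges c2 \<and>
        real (length c1) \<le> 4 * ln (real n) / (ln d) ^ 5 \<and>
        real (length c2) \<le> 4 * ln (real n) / (ln d) ^ 5
        \<longrightarrow> dist_gt E (set c1) (set c2) (10 * ln (real n) / (ln d) ^ 5))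
    \<ge> 1 - 10 * real n powr (-3/4)"
proof (intro exI[of _ "exp 4"] allI impI)
  fix d :: real assume dge: "exp 4 \<le> d"
  have d0: "0 < d" using dge by (smt (verit) exp_gt_zero)
  have ld: "4 \<le> ln d" using dge d0 by (metis exp_le_cancel_iff exp_ln)
  have ed1: "1 \<le> exp 2 * d"
  proof -
    have "(1::real) \<le> exp 2" by simp
    moreover have "1 \<le> d" using dge by (smt (verit) one_le_exp_iff)
    ultimately have "1 * 1 \<le> exp 2 * d" by (intro mult_mono) auto
    then show ?thesis by simp
  qed
  have c0: "0 < 10 / (exp 2 * d)" using d0 by simp
  have ev1: "eventually (\<lambda>n. (ln (real n) + 1)^2 / real n powr (1/8) < 10 / (exp 2 * d)) sequentially"
    using order_tendstoD(2)[OF asymp1 c0] .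
  have ev2: "eventually (\<lambda>n::nat. d \<le> real n \<and> 1 \<le> n) sequentially"
  proof -
    obtain m :: nat where "d \<le> real m" using real_arch_simple by blast
    then show ?thesis unfolding eventually_sequentially
      by (intro exI[of _ "max m 1"]) auto
  qed
  obtain n0 where n0: "\<And>n. n \<ge> n0 \<Longrightarrow> (ln (real n) + 1)^2 / real n powr (1/8) < 10 / (exp 2 * d) \<and> d \<le> real n \<and> 1 \<le> n"
    using eventually_conj[OF ev1 ev2] unfolding eventually_sequentially by blast
  show "\<exists>n0::nat. \<forall>n \<ge> n0.
    gnp_prob n (d / real n) (\<lambda>E. \<forall>c1 c2.
        is_cycle E c1 \<and> is_cycle E c2 \<and> cycle_edges c1 \<noteq> cycle_edges c2 \<and>
        real (length c1) \<le> 4 * ln (real n) / (ln d) ^ 5 \<and>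
        real (length c2) \<le> 4 * ln (real n) / (ln d) ^ 5
        \<longrightarrow> dist_gt E (set c1) (set c2) (10 * ln (real n) / (ln d) ^ 5))
    \<ge> 1 - 10 * real n powr (-3/4)"
  proof (intro exI[of _ n0] allI impI)
    fix n assume nn0: "n0 \<le> n"
    note nh = n0[OF nn0]
    have n1: "1 \<le> n" and dn: "d \<le> real n" using nh by auto
    have np: "0 < real n" using n1 by simp
    have hyp: "(ln (real n) + 1)^2 * (exp 2 * d) \<le> 10 * real n powr (1/8)"
    proof -
      have "(ln (real n) + 1)^2 / real n powr (1/8) < 10 / (exp 2 * d)" using nh by blast
      moreover have "0 < real n powr (1/8)" using np by simp
      moreover have "0 < exp 2 * d" using d0 by simp
      ultimately show ?thesis by (simp add: field_simps)
    qed
    define lam where "lam = ln (real n) / (ln d)^5"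
    define T where "T = nat \<lfloor>18 * lam + 1\<rfloor>"
    define p where "p = d / real n"
    have p0: "0 \<le> p" and p1: "p \<le> 1" unfolding p_def using d0 dn np by auto
    have lam0: "0 \<le> lam" unfolding lam_def using n1 ld by simp
    have hT: "real T \<le> 18 * (ln (real n) / (ln d)^5) + 1"
      unfolding T_def lam_def[symmetric] using lam0 by simp
    have Tn: "\<forall>t\<in>{1..T}. t - 1 \<le> n"
    proof
      fix t assume "t \<in> {1..T}"
      then have "real t \<le> real T" by simp
      also have "\<dots> \<le> 18 * lam + 1" using hT lam_def by simp
      also have "\<dots> \<le> ln (real n) + 1"
      proof -
        have x5: "1024 \<le> (ln d)^5"
        proof -
          have "(4::real)^5 \<le> (ln d)^5" using ld by (intro power_mono) auto
          then show ?thesis by simp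
        qed
        have "lam \<le> ln (real n) / 18" unfolding lam_def using n1 x5 ld by (intro divide_left_mono) auto
        then show ?thesis by linarith
      qed
      also have "\<dots> \<le> real n" using ln_le_minus_one[OF np] by linarith
      finally show "t - 1 \<le> n" by linarith
    qed
    define Good where "Good = (\<lambda>E. \<forall>c1 c2.
        is_cycle E c1 \<and> is_cycle E c2 \<and> cycle_edges c1 \<noteq> cycle_edges c2 \<and>
        real (length c1) \<le> 4 * ln (real n) / (ln d) ^ 5 \<and>
        real (length c2) \<le> 4 * ln (real n) / (ln d) ^ 5
        \<longrightarrow> dist_gt E (set c1) (set c2) (10 * ln (real n) / (ln d) ^ 5))"
    have bad: "\<exists>t\<in>{1..T}. \<exists>H\<in>Hs n t. H \<subseteq> E" if EA: "E \<subseteq> all_edges n" and nG: "\<not> Good E" for E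
    proof -
      obtain c1 c2 where cc: "is_cycle E c1" "is_cycle E c2" "cycle_edges c1 \<noteq> cycle_edges c2"
        "real (length c1) \<le> 4 * lam" "real (length c2) \<le> 4 * lam"
        and nd: "\<not> dist_gt E (set c1) (set c2) (10 * lam)"
        using nG unfolding Good_def lam_def by auto
      obtain xs where xs: "is_walk E xs" "hd xs \<in> set c1" "last xs \<in> set c2"
        "real (length xs - 1) \<le> 10 * lam"
        using nd unfolding dist_gt_def by auto
      obtain H where H: "H \<subseteq> E" "finite H" "finite (\<Union>H)" "card (\<Union>H) < card H"
        "card (\<Union>H) \<le> length c1 + length c2 + (length xs - 1)"
        using core[OF cc(1-3) xs(1-3)] by blast
      obtain H' where H': "H' \<subseteq> H" "card H' = card (\<Union>H) + 1" "finite H'"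
        using obtain_subset_with_card_n[of "card (\<Union>H) + 1" H] H(4) by auto
      have "card (\<Union>H') \<le> card (\<Union>H)" using H'(1) H(3) by (intro card_mono) auto
      then have lt: "card (\<Union>H') < card H'" using H'(2) by simp
      have "real (card H') \<le> 18 * lam + 1"
      proof -
        have "real (card H') \<le> real (length c1) + real (length c2) + real (length xs - 1) + 1"
          using H'(2) H(5) by simp
        then show ?thesis using cc(4,5) xs(4) by linarith
      qed
      then have tT: "card H' \<le> T" unfolding T_def by (rule le_nat_floor)
      have "H' \<in> Hs n (card H')" unfolding Hs_def using lt H'(1) H(1) EA by auto
      moreover have "card H' \<in> {1..T}" using tT H'(2) by simp
      moreover have "H' \<subseteq> E" using H'(1) H(1) by simp
      ultimately show ?thesis by blast
    qed
    have ub: "(\<Sum>E\<in>Pow (all_edges n). if Good E then p ^ card E * (1 - p) ^ (card (all_edges n) - card E) else 0)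
          \<ge> 1 - (\<Sum>t\<in>{1..T}. real (card (Hs n t)) * p ^ t)"
      by (rule union_bound[OF finite_all_edges p0 p1]) (use bad in \<open>auto simp: Hs_def\<close>)
    have sb: "(\<Sum>t\<in>{1..T}. real (card (Hs n t)) * p ^ t) \<le> 10 * real n powr (-3/4)"
    proof -
      have "(\<Sum>t\<in>{1..T}. real (card (Hs n t)) * p ^ t) \<le> real T * real T * (exp 2 * d)^T / real n"
        unfolding p_def using sum_bound[OF _ _ ed1 Tn] n1 d0 by simp
      also have "\<dots> \<le> 10 * real n powr (-3/4)"
        by (rule final_numeric[OF ld d0 n1 hyp hT])
      finally show ?thesis .
    qed
    have fin: "gnp_prob n (d / real n) Good \<ge> 1 - 10 * real n powr (-3/4)"
      using ub sb unfolding gnp_prob_def p_def by linarith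
    then show "gnp_prob n (d / real n) (\<lambda>E. \<forall>c1 c2.
        is_cycle E c1 \<and> is_cycle E c2 \<and> cycle_edges c1 \<noteq> cycle_edges c2 \<and>
        real (length c1) \<le> 4 * ln (real n) / (ln d) ^ 5 \<and>
        real (length c2) \<le> 4 * ln (real n) / (ln d) ^ 5
        \<longrightarrow> dist_gt E (set c1) (set c2) (10 * ln (real n) / (ln d) ^ 5))
    \<ge> 1 - 10 * real n powr (-3/4)" unfolding Good_def .
  qed
qed


end
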